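(* Let $f\in\mathbf C[[x]][y]$ be a reduced distinguished polynomial of degree $n\ge 2$, and let $d$ be the l.c.m. of the degrees of its irreducible factors. Then for every $r\in\frac1d\mathbf Z$: $$\mathcal F_rf\subset\mathcal F_{r+1}f'_x+\mathcal E_{>r}f'_y.$$
   Context: Distinguished: monic in $y$ with $f(0,y)=y^n$. Write $f=\prod_{i=1}^n(y-a_i)$ with pairwise distinct $a_i$ in $\overline K=\bigcup_{e\ge1}\mathbf C[[x^{1/e}]][1/x]$ (valuation $\nu$). Let $\varepsilon_i=\prod_{j\ne i}(y-a_j)$, a basis of the $\overline K$-space $\overline{\mathcal E}$ of polynomials of degree $<n$ in $y$. For $w=\sum_iw_i\varepsilon_i$, $\mathrm{val}(w)=\inf_i\nu(w_i)$. With $K=\mathbf C((x))$, $\mathcal E$ (resp. $\mathcal F$) is the $K$-space of polynomials in $K[y]$ of degree $<n$ (resp. $<n-1$); $\mathcal E_r=\{w\in\mathcal E:\mathrm{val}(w)\ge r\}$, $\mathcal E_{>r}=\{w\in\mathcal E:\mathrm{val}(w)>r\}$, $\mathcal F_r=\mathcal E_r\cap\mathcal F$. $f'_x,f'_y$ are the partial derivatives. *)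

theory Defs
  imports "HOL-Computational_Algebra.Computational_Algebra"
begin

definition distinguished :: "complex fps poly \<Rightarrow> bool" where
  "distinguished f \<longleftrightarrow> lead_coeff f = 1 \<and> (\<forall>k < degree f. poly.coeff f k $ 0 = 0)"

definition reduced :: "complex fps poly \<Rightarrow> bool" where
  "reduced f \<longleftrightarrow> f \<noteq> 0 \<and> (\<forall>g. g * g dvd f \<longrightarrow> is_unit g)"

definition lcm_irr_degrees :: "complex fps poly \<Rightarrow> nat" where
  "lcm_irr_degrees f = Lcm {degree g | g. irreducible g \<and> g dvd f}"

text \<open>Substitution x := t^N, embedding C((x)) into C((t)) = C((x^(1/N))).\<close>
definition ramify :: "nat \<Rightarrow> complex fls \<Rightarrow> complex fls" where
  "ramify N c = fls_compose_fps c (fps_X ^ N)"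

definition fps_poly_to_fls :: "complex fps poly \<Rightarrow> complex fls poly" where
  "fps_poly_to_fls f = map_poly fps_to_fls f"

definition dx :: "complex fps poly \<Rightarrow> complex fps poly" where
  "dx f = map_poly fps_deriv f"

definition dy :: "complex fps poly \<Rightarrow> complex fps poly" where
  "dy f = pderiv f"

definition eps :: "nat \<Rightarrow> (nat \<Rightarrow> complex fls) \<Rightarrow> nat \<Rightarrow> complex fls poly" where
  "eps n a i = (\<Prod>j\<in>{..<n} - {i}. [:- a j, 1:])"

text \<open>Valuation on C((t)) with t = x^(1/N): nu(c) = subdeg(c)/N; nu(0) = infinity.\<close>
definition nu_ge :: "nat \<Rightarrow> complex fls \<Rightarrow> rat \<Rightarrow> bool" where
  "nu_ge N c r \<longleftrightarrow> c = 0 \<or> of_int (fls_subdegree c) / of_nat N \<ge> r"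

definition nu_gt :: "nat \<Rightarrow> complex fls \<Rightarrow> rat \<Rightarrow> bool" where
  "nu_gt N c r \<longleftrightarrow> c = 0 \<or> of_int (fls_subdegree c) / of_nat N > r"

text \<open>val(w) >= r, resp. val(w) > r, for w in E, computed by writing w (viewed in
  C((t))[y]) in the basis eps_i: val(w) = inf_i nu(w_i).\<close>
definition val_ge :: "nat \<Rightarrow> nat \<Rightarrow> (nat \<Rightarrow> complex fls) \<Rightarrow> complex fls poly \<Rightarrow> rat \<Rightarrow> bool" where
  "val_ge N n a w r \<longleftrightarrow> (\<exists>c. map_poly (ramify N) w = (\<Sum>i<n. smult (c i) (eps n a i))
       \<and> (\<forall>i<n. nu_ge N (c i) r))"

definition val_gt :: "nat \<Rightarrow> nat \<Rightarrow> (nat \<Rightarrow> complex fls) \<Rightarrow> complex fls poly \<Rightarrow> rat \<Rightarrow> bool" where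
  "val_gt N n a w r \<longleftrightarrow> (\<exists>c. map_poly (ramify N) w = (\<Sum>i<n. smult (c i) (eps n a i))
       \<and> (\<forall>i<n. nu_gt N (c i) r))"

end

theory Submission
  imports Defs
begin

unbundle fps_syntax



lemma hom_sum:
  assumes "h 0 = 0" "\<And>x y. h (x+y) = h x + h y"
  shows "h (sum f A) = (\<Sum>a\<in>A. h (f a))"
  by (induct A rule: infinite_finite_induct) (auto simp: assms)

lemma map_poly_add':
  assumes "h 0 = 0" "\<And>x y. h (x+y) = h x + h y"
  shows "map_poly h (p+q) = map_poly h p + map_poly h q"
  by (intro poly_eqI) (simp add: coeff_map_poly assms)

lemma map_poly_sum':
  assumes "h 0 = 0" "\<And>x y. h (x+y) = h x + h y"
  shows "map_poly h (sum f A) = (\<Sum>a\<in>A. map_poly h (f a))"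
  by (induct A rule: infinite_finite_induct) (auto simp: assms map_poly_add')

lemma map_poly_mult':
  fixes h :: "'a::comm_semiring_1 \<Rightarrow> 'b::comm_semiring_1"
  assumes "h 0 = 0" "\<And>x y. h (x+y) = h x + h y" "\<And>x y. h (x*y) = h x * h y"
  shows "map_poly h (p*q) = map_poly h p * map_poly h q"
  by (intro poly_eqI) (simp add: coeff_map_poly coeff_mult assms hom_sum[of h])

lemma map_poly_prod':
  fixes h :: "'a::comm_semiring_1 \<Rightarrow> 'b::comm_semiring_1"
  assumes "h 0 = 0" "h 1 = 1" "\<And>x y. h (x+y) = h x + h y" "\<And>x y. h (x*y) = h x * h y"
  shows "map_poly h (prod f A) = (\<Prod>a\<in>A. map_poly h (f a))"
  by (induct A rule: infinite_finite_induct) (auto simp: assms map_poly_mult')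

lemma map_poly_pderiv':
  fixes h :: "'a::idom \<Rightarrow> 'b::idom"
  assumes "h 0 = 0" "\<And>m x. h (of_nat m * x) = of_nat m * h x"
  shows "map_poly h (pderiv p) = pderiv (map_poly h p)"
  by (intro poly_eqI) (simp add: coeff_map_poly coeff_pderiv assms del: of_nat_Suc)

lemma map_poly_deriv_mult:
  fixes D :: "'a::comm_ring_1 \<Rightarrow> 'a"
  assumes "D 0 = 0" "\<And>x y. D (x+y) = D x + D y" "\<And>x y. D (x*y) = x * D y + D x * y"
  shows "map_poly D (p*q) = map_poly D p * q + p * map_poly D q"
proof (intro poly_eqI)
  fix m
  have "coeff (map_poly D (p*q)) m = (\<Sum>i\<le>m. coeff p i * D (coeff q (m-i)) + D (coeff p i) * coeff q (m-i))"
    by (simp add: coeff_map_poly coeff_mult assms hom_sum[of D])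
  also have "\<dots> = (\<Sum>i\<le>m. D (coeff p i) * coeff q (m-i)) + (\<Sum>i\<le>m. coeff p i * D (coeff q (m-i)))"
    by (simp add: sum.distrib add.commute)
  also have "\<dots> = coeff (map_poly D p * q + p * map_poly D q) m"
    by (simp add: coeff_mult coeff_map_poly assms)
  finally show "coeff (map_poly D (p*q)) m = coeff (map_poly D p * q + p * map_poly D q) m" .
qed

lemma deriv_one:
  fixes D :: "'a::comm_ring_1 \<Rightarrow> 'a"
  assumes "\<And>x y. D (x*y) = x * D y + D x * y"
  shows "D 1 = 0"
  using assms[of 1 1] by simp

lemma map_poly_deriv_prod:
  fixes D :: "'a::comm_ring_1 \<Rightarrow> 'a"
  assumes D0: "D 0 = 0" and Dadd: "\<And>x y. D (x+y) = D x + D y"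
    and Dmult: "\<And>x y. D (x*y) = x * D y + D x * y"
  shows "map_poly D (prod f as) = (\<Sum>a\<in>as. prod f (as - {a}) * map_poly D (f a))"
proof (induct as rule: infinite_finite_induct)
  case (infinite A)
  then show ?case by (simp add: deriv_one[OF Dmult] map_poly_1)
next
  case empty
  then show ?case by (simp add: deriv_one[OF Dmult] map_poly_1)
next
  case (insert a as)
  then have id: "prod f (insert a as) = f a * prod f as"
    "\<And>g. sum g (insert a as) = g a + sum g as"
    "insert a as - {a} = as"
    by auto
  have "prod f (insert a as - {b}) = f a * prod f (as - {b})" if "b \<in> as" for b
  proof -
    from \<open>a \<notin> as\<close> that have *: "insert a as - {b} = insert a (as - {b})"
      by auto
    show ?thesis
      unfolding * by (subst prod.insert) (use insert in auto)
  qed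
  then show ?case
    unfolding id map_poly_deriv_mult[OF D0 Dadd Dmult] insert(3) sum_distrib_left
    by (auto simp add: ac_simps intro!: sum.cong)
qed

context
  fixes n :: nat and a :: "nat \<Rightarrow> complex fls"
  assumes inj: "inj_on a {..<n}"
begin

definition epsij :: "nat \<Rightarrow> nat \<Rightarrow> complex fls poly" where
  "epsij i j = (\<Prod>k\<in>{..<n} - {i,j}. [:- a k, 1:])"

definition Dd :: "nat \<Rightarrow> complex fls" where
  "Dd i = poly (eps n a i) (a i)"

lemma eps_vanish: "k < n \<Longrightarrow> k \<noteq> i \<Longrightarrow> poly (eps n a i) (a k) = 0"
  unfolding eps_def poly_prod by (rule prod_zero) auto

lemma Dd_nz: "i < n \<Longrightarrow> Dd i \<noteq> 0"
  unfolding Dd_def eps_def poly_prod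
  using inj by (auto simp: inj_on_def)

lemma degree_eps: "i < n \<Longrightarrow> degree (eps n a i) = n - 1"
  unfolding eps_def by (subst degree_prod_sum_eq) auto

lemma lead_eps: "coeff (eps n a i) (degree (eps n a i)) = 1"
  unfolding eps_def lead_coeff_prod by simp

lemma P_split: "i < n \<Longrightarrow> (\<Prod>k<n. [:- a k, 1:]) = [:- a i, 1:] * eps n a i"
  unfolding eps_def by (subst prod.remove[of _ i]) auto

lemma eps_split: "i < n \<Longrightarrow> j < n \<Longrightarrow> i \<noteq> j \<Longrightarrow> eps n a i = [:- a j, 1:] * epsij i j"
  unfolding eps_def epsij_def
  by (subst prod.remove[of _ j]) (auto simp: insert_commute Diff_insert2[symmetric])

lemma epsij_sym: "epsij i j = epsij j i"
  unfolding epsij_def by (simp add: insert_commute)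

lemma eps_mult: "i < n \<Longrightarrow> j < n \<Longrightarrow> i \<noteq> j \<Longrightarrow>
    eps n a i * eps n a j = (\<Prod>k<n. [:- a k, 1:]) * epsij i j"
proof -
  assume ij: "i < n" "j < n" "i \<noteq> j"
  have "eps n a i * eps n a j = ([:- a j, 1:] * epsij i j) * ([:- a i, 1:] * epsij j i)"
    using eps_split[OF ij] eps_split[of j i] ij by (simp only:)
  also have "\<dots> = ([:- a i, 1:] * ([:- a j, 1:] * epsij i j)) * epsij i j"
    by (simp only: epsij_sym[of j i] ac_simps)
  also have "\<dots> = (\<Prod>k<n. [:- a k, 1:]) * epsij i j"
    using P_split[OF ij(1)] eps_split[OF ij] by (simp only:)
  finally show ?thesis .
qed

lemma epsij_vanish: "k < n \<Longrightarrow> k \<noteq> i \<Longrightarrow> k \<noteq> j \<Longrightarrow> poly (epsij i j) (a k) = 0"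
  unfolding epsij_def poly_prod by (rule prod_zero) auto

lemma epsij_val: "k < n \<Longrightarrow> j < n \<Longrightarrow> k \<noteq> j \<Longrightarrow> poly (epsij k j) (a k) = Dd k / (a k - a j)"
proof -
  assume kj: "k < n" "j < n" "k \<noteq> j"
  have ne: "a k - a j \<noteq> 0" using inj kj by (auto simp: inj_on_def)
  have "Dd k = poly ([:- a j, 1:] * epsij k j) (a k)"
    unfolding Dd_def using eps_split[OF kj] by (simp only:)
  also have "\<dots> = (a k - a j) * poly (epsij k j) (a k)"
    by (simp only: poly_mult) (simp add: algebra_simps)
  finally have "Dd k = (a k - a j) * poly (epsij k j) (a k)" .
  thus ?thesis using ne by (simp add: field_simps)
qed

lemma eval_combo: "k < n \<Longrightarrow> poly (\<Sum>i<n. smult (c i) (eps n a i)) (a k) = c k * Dd k"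
proof -
  assume k: "k < n"
  have "poly (\<Sum>i<n. smult (c i) (eps n a i)) (a k) = (\<Sum>i<n. c i * poly (eps n a i) (a k))"
    by (simp add: poly_sum)
  also have "\<dots> = c k * poly (eps n a k) (a k)"
    using k by (subst sum.remove[of _ k]) (auto simp: eps_vanish intro!: sum.neutral)
  finally show ?thesis by (simp add: Dd_def)
qed

lemma combo_coeff_uniq: "p = (\<Sum>i<n. smult (c i) (eps n a i)) \<Longrightarrow> k < n \<Longrightarrow> c k = poly p (a k) / Dd k"
  using eval_combo Dd_nz by simp

lemma degree_combo: "n > 0 \<Longrightarrow> degree (\<Sum>i<n. smult (c i) (eps n a i)) < n"
  by (intro degree_sum_less) (auto intro: le_less_trans[OF degree_smult_le] simp: degree_eps)

lemma interpolation:
  assumes "degree p < n"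
  shows "p = (\<Sum>i<n. smult (poly p (a i) / Dd i) (eps n a i))"
proof (rule poly_eqI_degree[of "a ` {..<n}"])
  show "poly p x = poly (\<Sum>i<n. smult (poly p (a i) / Dd i) (eps n a i)) x" if "x \<in> a ` {..<n}" for x
    using that eval_combo Dd_nz by auto
  have c: "card (a ` {..<n}) = n" using inj by (simp add: card_image)
  show "degree p < card (a ` {..<n})" using c assms by simp
  show "degree (\<Sum>i<n. smult (poly p (a i) / Dd i) (eps n a i)) < card (a ` {..<n})"
    using c assms degree_combo by simp
qed

lemma combo_top_coeff: "coeff (\<Sum>i<n. smult (c i) (eps n a i)) (n - 1) = (\<Sum>i<n. c i)"
proof -
  have 1: "coeff (eps n a i) (n - 1) = 1" if "i < n" for i
    using degree_eps[OF that] lead_eps[of i] by simp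
  have "coeff (\<Sum>i<n. smult (c i) (eps n a i)) (n - 1) = (\<Sum>i<n. c i * coeff (eps n a i) (n - 1))"
    by (simp add: coeff_sum del: One_nat_def)
  also have "\<dots> = (\<Sum>i<n. c i)" by (intro sum.cong) (simp_all add: 1 del: One_nat_def)
  finally show ?thesis .
qed

lemma pderiv_P: "pderiv (\<Prod>k<n. [:- a k, 1:]) = (\<Sum>i<n. eps n a i)"
proof -
  have 1: "pderiv [:- a k, 1:] = 1" for k by (simp add: pderiv_pCons)
  show ?thesis unfolding eps_def pderiv_prod 1 by simp
qed

lemma deriv_P:
  fixes D :: "complex fls \<Rightarrow> complex fls"
  assumes D0: "D 0 = 0" and Dadd: "\<And>x y. D (x+y) = D x + D y"
    and Dmult: "\<And>x y. D (x*y) = x * D y + D x * y"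
  shows "map_poly D (\<Prod>k<n. [:- a k, 1:]) = (\<Sum>i<n. smult (- D (a i)) (eps n a i))"
proof -
  have D1: "D 1 = 0" by (rule deriv_one[OF Dmult])
  have Dm: "D (-x) = - D x" for x using Dadd[of x "-x"] D0 by (simp add: eq_neg_iff_add_eq_0 add.commute)
  have "map_poly D [:- a k, 1:] = [:- D (a k):]" for k
    by (simp add: map_poly_pCons D0 D1 Dm)
  thus ?thesis
    unfolding map_poly_deriv_prod[OF D0 Dadd Dmult] eps_def
    by (simp add: mult.commute)
qed


lemma laplace_identity:
  fixes D :: "complex fls \<Rightarrow> complex fls" and u v w :: "complex fls poly"
  assumes D0: "D 0 = 0" and Dadd: "\<And>x y. D (x+y) = D x + D y"
    and Dmult: "\<And>x y. D (x*y) = x * D y + D x * y"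
    and uc: "u = (\<Sum>i<n. smult (uc i) (eps n a i))"
    and vc: "v = (\<Sum>i<n. smult (vc i) (eps n a i))"
    and wc: "w = (\<Sum>i<n. smult (wc i) (eps n a i))"
    and eq: "w * (\<Prod>k<n. [:- a k, 1:]) = u * map_poly D (\<Prod>k<n. [:- a k, 1:]) + v * pderiv (\<Prod>k<n. [:- a k, 1:])"
  shows "\<forall>k<n. vc k = D (a k) * uc k"
    and "\<forall>k<n. wc k = (\<Sum>j\<in>{..<n}-{k}. (D (a k) - D (a j)) / (a k - a j) * (uc k - uc j))"
proof -
  define P where "P = (\<Prod>k<n. [:- a k, 1:])"
  have dP: "map_poly D P = (\<Sum>i<n. smult (- D (a i)) (eps n a i))"
    unfolding P_def by (rule deriv_P[OF D0 Dadd Dmult])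
  have pP: "pderiv P = (\<Sum>i<n. smult 1 (eps n a i))"
    unfolding P_def pderiv_P by simp
  have P0: "poly P (a k) = 0" if "k < n" for k
    unfolding P_def using P_split[OF that] by simp
  have eqP: "w * P = u * map_poly D P + v * pderiv P" using eq unfolding P_def .
  show vcu: "\<forall>k<n. vc k = D (a k) * uc k"
  proof (intro allI impI)
    fix k assume k: "k < n"
    have "poly (w * P) (a k) = poly (u * map_poly D P + v * pderiv P) (a k)" using eqP by simp
    hence "0 = uc k * Dd k * (- D (a k) * Dd k) + vc k * Dd k * (1 * Dd k)"
      using P0[OF k] unfolding poly_add poly_mult
      by (simp only: uc vc dP pP eval_combo[OF k]) simp
    moreover have "Dd k * Dd k * (vc k - D (a k) * uc k) = uc k * Dd k * (- D (a k) * Dd k) + vc k * Dd k * (1 * Dd k)"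
      by (simp add: algebra_simps)
    ultimately have "Dd k * Dd k * (vc k - D (a k) * uc k) = 0" by simp
    hence "vc k - D (a k) * uc k = 0" using Dd_nz[OF k] by (simp only: mult_eq_0_iff) simp
    thus "vc k = D (a k) * uc k" by simp
  qed
  define W where "W = (\<Sum>i<n. \<Sum>j<n. smult ((D (a i) - D (a j)) * uc i) (epsij i j))"
  have "u * map_poly D P = (\<Sum>i<n. \<Sum>j<n. smult (uc i * - D (a j)) (eps n a i * eps n a j))"
    unfolding uc dP sum_product by (simp add: mult_smult_left mult_smult_right mult.commute)
  moreover have "v * pderiv P = (\<Sum>i<n. \<Sum>j<n. smult (vc i) (eps n a i * eps n a j))"
    unfolding vc pP sum_product by (simp add: mult_smult_left mult_smult_right)
  ultimately have "u * map_poly D P + v * pderiv P =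
      (\<Sum>i<n. \<Sum>j<n. smult (uc i * - D (a j)) (eps n a i * eps n a j) + smult (vc i) (eps n a i * eps n a j))"
    by (simp only: sum.distrib)
  also have "\<dots> = (\<Sum>i<n. \<Sum>j<n. P * smult ((D (a i) - D (a j)) * uc i) (epsij i j))"
  proof (intro sum.cong refl)
    fix i j assume i: "i \<in> {..<n}" and j: "j \<in> {..<n}"
    have "smult (uc i * - D (a j)) (eps n a i * eps n a j) + smult (vc i) (eps n a i * eps n a j)
        = smult ((D (a i) - D (a j)) * uc i) (eps n a i * eps n a j)"
      using vcu i by (simp add: smult_add_left[symmetric] algebra_simps)
    also have "\<dots> = P * smult ((D (a i) - D (a j)) * uc i) (epsij i j)"
    proof (cases "i = j")
      case True then show ?thesis by simp
    next
      case False
      then show ?thesis using eps_mult[of i j] i j unfolding P_def by (simp add: mult_smult_right)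
    qed
    finally show "smult (uc i * - D (a j)) (eps n a i * eps n a j) + smult (vc i) (eps n a i * eps n a j)
        = P * smult ((D (a i) - D (a j)) * uc i) (epsij i j)" .
  qed
  also have "\<dots> = P * W" unfolding W_def by (simp add: sum_distrib_left)
  finally have "w * P = P * W" using eqP by simp
  moreover have "P \<noteq> 0" unfolding P_def by (simp add: prod_zero_iff)
  ultimately have wW: "w = W" by (simp add: mult.commute)
  show "\<forall>k<n. wc k = (\<Sum>j\<in>{..<n}-{k}. (D (a k) - D (a j)) / (a k - a j) * (uc k - uc j))"
  proof (intro allI impI)
    fix k assume k: "k < n"
    define T where "T i j = (D (a i) - D (a j)) * uc i * poly (epsij i j) (a k)" for i j
    have "poly W (a k) = (\<Sum>i<n. \<Sum>j<n. T i j)"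
      unfolding W_def T_def by (simp add: poly_sum)
    also have "\<dots> = (\<Sum>j<n. T k j) + (\<Sum>i\<in>{..<n}-{k}. \<Sum>j<n. T i j)"
      using k by (subst sum.remove[of _ k]) auto
    also have "(\<Sum>i\<in>{..<n}-{k}. \<Sum>j<n. T i j) = (\<Sum>i\<in>{..<n}-{k}. T i k)"
    proof (intro sum.cong refl)
      fix i assume i: "i \<in> {..<n}-{k}"
      have "(\<Sum>j<n. T i j) = T i k + (\<Sum>j\<in>{..<n}-{k}. T i j)"
        using k by (subst sum.remove[of _ k]) auto
      also have "(\<Sum>j\<in>{..<n}-{k}. T i j) = 0"
      proof (intro sum.neutral ballI)
        fix j assume j: "j \<in> {..<n}-{k}"
        show "T i j = 0"
        proof (cases "i = j")
          case True then show ?thesis unfolding T_def by simp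
        next
          case False then show ?thesis unfolding T_def using i j k epsij_vanish[of k i j] by auto
        qed
      qed
      finally show "(\<Sum>j<n. T i j) = T i k" by simp
    qed
    also have "(\<Sum>j<n. T k j) = (\<Sum>j\<in>{..<n}-{k}. T k j)"
      using k by (subst sum.remove[of _ k]) (auto simp: T_def)
    finally have "poly W (a k) = (\<Sum>j\<in>{..<n}-{k}. T k j + T j k)"
      by (simp add: sum.distrib)
    also have "\<dots> = (\<Sum>j\<in>{..<n}-{k}. Dd k * ((D (a k) - D (a j)) / (a k - a j) * (uc k - uc j)))"
    proof (intro sum.cong refl)
      fix j assume j: "j \<in> {..<n}-{k}"
      have e1: "poly (epsij k j) (a k) = Dd k / (a k - a j)" using j k by (intro epsij_val) auto
      have e2: "poly (epsij j k) (a k) = Dd k / (a k - a j)" using e1 epsij_sym by simp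
      have ne: "a k - a j \<noteq> 0" using inj j k by (auto simp: inj_on_def)
      show "T k j + T j k = Dd k * ((D (a k) - D (a j)) / (a k - a j) * (uc k - uc j))"
      proof -
        define X where "X = Dd k / (a k - a j)"
        have e1': "poly (epsij k j) (a k) = X" and e2': "poly (epsij j k) (a k) = X"
          using e1 e2 X_def by simp_all
        have r: "Dd k * ((D (a k) - D (a j)) / (a k - a j)) = (D (a k) - D (a j)) * X"
          unfolding X_def by simp
        have "Dd k * ((D (a k) - D (a j)) / (a k - a j) * (uc k - uc j)) =
            (Dd k * ((D (a k) - D (a j)) / (a k - a j))) * (uc k - uc j)" by (simp only: mult.assoc)
        also have "\<dots> = (D (a k) - D (a j)) * X * (uc k - uc j)" by (simp only: r)
        also have "\<dots> = T k j + T j k" unfolding T_def e1' e2' by (simp add: algebra_simps)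
        finally show ?thesis by simp
      qed
    qed
    also have "\<dots> = Dd k * (\<Sum>j\<in>{..<n}-{k}. (D (a k) - D (a j)) / (a k - a j) * (uc k - uc j))"
      by (simp add: sum_distrib_left)
    finally have "poly w (a k) = Dd k * (\<Sum>j\<in>{..<n}-{k}. (D (a k) - D (a j)) / (a k - a j) * (uc k - uc j))"
      using wW by simp
    moreover have "poly w (a k) = wc k * Dd k" using wc eval_combo[OF k] by simp
    ultimately show "wc k = (\<Sum>j\<in>{..<n}-{k}. (D (a k) - D (a j)) / (a k - a j) * (uc k - uc j))"
      using Dd_nz[OF k] by (simp add: mult.commute)
  qed
qed

end



definition vge :: "'a::zero fls \<Rightarrow> int \<Rightarrow> bool" where
  "vge z M \<longleftrightarrow> (\<forall>k<M. z $$ k = 0)"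

lemma vge_0[simp]: "vge 0 M" by (simp add: vge_def)
lemma vge_add: "vge a M \<Longrightarrow> vge b M \<Longrightarrow> vge (a+b) (M::int)"
  by (simp add: vge_def)
lemma vge_diff: "vge a M \<Longrightarrow> vge b M \<Longrightarrow> vge (a-b::'a::ab_group_add fls) (M::int)"
  by (simp add: vge_def)
lemma vge_uminus: "vge a M \<Longrightarrow> vge (-a::'a::ab_group_add fls) (M::int)"
  by (simp add: vge_def)
lemma vge_mono: "vge a M \<Longrightarrow> M' \<le> M \<Longrightarrow> vge a M'"
  by (simp add: vge_def)
lemma vge_sum: "(\<And>i. i \<in> I \<Longrightarrow> vge (f i) M) \<Longrightarrow> vge (\<Sum>i\<in>I. f i) M"
  by (simp add: vge_def fls_nth_sum)
lemma vge_subdeg: assumes z0: "z \<noteq> 0" shows "vge z M \<longleftrightarrow> M \<le> fls_subdegree z"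
proof
  assume v: "vge z M"
  show "M \<le> fls_subdegree z"
  proof (rule ccontr)
    assume "\<not> M \<le> fls_subdegree z"
    hence "fls_subdegree z < M" by simp
    hence "z $$ fls_subdegree z = 0" using v unfolding vge_def by blast
    thus False using z0 by simp
  qed
next
  assume "M \<le> fls_subdegree z"
  thus "vge z M" unfolding vge_def by simp
qed

lemma vge_mult:
  fixes a b :: "'a::{comm_ring_1} fls"
  assumes "vge a A" "vge b B"
  shows "vge (a*b) (A+B) \<and> (a*b) $$ (A+B) = a $$ A * b $$ B"
proof (cases "a = 0 \<or> b = 0")
  case True then show ?thesis by auto
next
  case False
  hence a0: "a \<noteq> 0" and b0: "b \<noteq> 0" by auto
  have da: "A \<le> fls_subdegree a" using vge_subdeg[OF a0] assms by simp
  have db: "B \<le> fls_subdegree b" using vge_subdeg[OF b0] assms by simp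
  have 1: "vge (a*b) (A+B)" unfolding vge_def
    using da db by (intro allI impI fls_times_nth_eq0) simp
  show ?thesis
  proof (cases "A = fls_subdegree a \<and> B = fls_subdegree b")
    case True
    have "(a*b) $$ (A+B) = (\<Sum>i=fls_subdegree a..A + B - fls_subdegree b. a $$ i * b $$ (A + B - i))"
      by (rule fls_times_nth(2))
    also have "\<dots> = a $$ A * b $$ B" using True by simp
    finally have "(a*b) $$ (A+B) = a $$ A * b $$ B" .
    with 1 show ?thesis by blast
  next
    case False
    hence "A < fls_subdegree a \<or> B < fls_subdegree b" using da db by auto
    hence "a $$ A = 0 \<or> b $$ B = 0" using fls_eq0_below_subdegree by blast
    moreover have "(a*b) $$ (A+B) = 0"
      using da db False by (intro fls_times_nth_eq0) auto
    ultimately have "(a*b) $$ (A+B) = a $$ A * b $$ B" by (elim disjE) simp_all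
    with 1 show ?thesis by blast
  qed
qed

lemma vge_power:
  fixes a :: "'a::{comm_ring_1} fls"
  assumes "vge a A"
  shows "vge (a^k) (int k*A) \<and> (a^k) $$ (int k*A) = (a $$ A)^k"
proof (induction k)
  case 0
  then show ?case by (simp add: vge_def)
next
  case (Suc k)
  have m: "vge (a * a^k) (A + int k * A) \<and> (a*a^k) $$ (A + int k*A) = a $$ A * (a^k) $$ (int k * A)"
    using vge_mult[OF assms Suc[THEN conjunct1]] .
  have eq: "int (Suc k) * A = A + int k * A" by (simp add: algebra_simps)
  show ?case unfolding eq power_Suc by (simp only: m Suc[THEN conjunct2] simp_thms)
qed


lemma laplacian_nonzero:
  fixes lam :: "nat \<Rightarrow> complex" and q :: "nat \<Rightarrow> nat \<Rightarrow> real"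
  assumes qpos: "\<And>k j. q k j > 0"
    and sum0: "(\<Sum>k<n. lam k) = 0" and nz: "\<exists>k<n. lam k \<noteq> 0"
  shows "\<exists>k<n. (\<Sum>j\<in>{..<n}-{k}. of_real (q k j) * (lam k - lam j)) \<noteq> 0"
proof -
  have ne: "\<exists>i<n. \<exists>j<n. lam i \<noteq> lam j"
  proof (rule ccontr)
    assume H: "\<not> (\<exists>i<n. \<exists>j<n. lam i \<noteq> lam j)"
    obtain k where k: "k < n" "lam k \<noteq> 0" using nz by blast
    have all: "\<forall>j<n. lam j = lam k" using H k(1) by blast
    have "(\<Sum>j<n. lam j) = (\<Sum>j<n. lam k)" using all by (intro sum.cong) auto
    also have "\<dots> = of_nat n * lam k" by simp
    finally have "of_nat n * lam k = 0" using sum0 by simp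
    with k show False by simp
  qed
  have key: "\<exists>k<n. (\<Sum>j\<in>{..<n}-{k}. q k j * (g k - g j)) \<noteq> 0"
    if Hg: "\<exists>i<n. \<exists>j<n. g i \<noteq> g j" for g :: "nat \<Rightarrow> real"
  proof -
    have fin: "finite (g ` {..<n})" and nemp: "g ` {..<n} \<noteq> {}" using Hg by auto
    obtain k where k: "k < n" "g k = Max (g ` {..<n})"
      using Max_in[OF fin nemp] by auto
    have kmax: "\<And>j. j < n \<Longrightarrow> g j \<le> g k" using k fin by auto
    obtain i j where ij: "i<n" "j<n" "g i \<noteq> g j" using Hg by blast
    have "g i < g k \<or> g j < g k" using kmax[OF ij(1)] kmax[OF ij(2)] ij(3) by linarith
    then obtain j0 where j0: "j0 < n" "g j0 < g k" using ij by auto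
    have "0 < (\<Sum>j\<in>{..<n}-{k}. q k j * (g k - g j))"
    proof (rule sum_pos2[of _ j0])
      show "finite ({..<n}-{k})" by simp
      show "j0 \<in> {..<n}-{k}" using j0 by auto
      show "0 < q k j0 * (g k - g j0)" using qpos j0 by simp
      show "\<And>j. j \<in> {..<n}-{k} \<Longrightarrow> 0 \<le> q k j * (g k - g j)"
        using qpos kmax by (simp add: less_imp_le)
    qed
    thus ?thesis using k by auto
  qed
  have re: "Re (\<Sum>j\<in>{..<n}-{k}. of_real (q k j) * (lam k - lam j)) =
      (\<Sum>j\<in>{..<n}-{k}. q k j * (Re (lam k) - Re (lam j)))" for k
    by (simp add: Re_sum)
  have im: "Im (\<Sum>j\<in>{..<n}-{k}. of_real (q k j) * (lam k - lam j)) =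
      (\<Sum>j\<in>{..<n}-{k}. q k j * (Im (lam k) - Im (lam j)))" for k
    by (simp add: Im_sum)
  from ne obtain i j where ij: "i < n" "j < n" "lam i \<noteq> lam j" by auto
  show ?thesis
  proof (cases "Re (lam i) = Re (lam j)")
    case True
    hence "Im (lam i) \<noteq> Im (lam j)" using ij(3) by (auto simp: complex_eq_iff)
    then obtain k where k: "k<n" "(\<Sum>j\<in>{..<n}-{k}. q k j * (Im (lam k) - Im (lam j))) \<noteq> 0"
      using key[of "\<lambda>x. Im (lam x)"] ij by blast
    show ?thesis
    proof (intro exI conjI)
      show "k < n" by fact
      show "(\<Sum>j\<in>{..<n}-{k}. of_real (q k j) * (lam k - lam j)) \<noteq> 0"
        using k(2) im[of k] by (metis zero_complex.sel(2))
    qed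
  next
    case False
    then obtain k where k: "k<n" "(\<Sum>j\<in>{..<n}-{k}. q k j * (Re (lam k) - Re (lam j))) \<noteq> 0"
      using key[of "\<lambda>x. Re (lam x)"] ij by blast
    show ?thesis
    proof (intro exI conjI)
      show "k < n" by fact
      show "(\<Sum>j\<in>{..<n}-{k}. of_real (q k j) * (lam k - lam j)) \<noteq> 0"
        using k(2) re[of k] by (metis zero_complex.sel(1))
    qed
  qed
qed


definition Dxf :: "nat \<Rightarrow> complex fls \<Rightarrow> complex fls" where
  "Dxf N z = fls_const (inverse (of_nat N)) * fls_shift (int N - 1) (fls_deriv z)"

lemma Dxf_0: "Dxf N 0 = 0" by (simp add: Dxf_def)
lemma Dxf_add: "Dxf N (x+y) = Dxf N x + Dxf N y" by (simp add: Dxf_def algebra_simps)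
lemma Dxf_diff: "Dxf N (x-y) = Dxf N x - Dxf N y" by (simp add: Dxf_def algebra_simps)
lemma Dxf_mult: "Dxf N (x*y) = x * Dxf N y + Dxf N x * y"
proof -
  have "fls_shift (int N - 1) (fls_deriv (x*y)) =
      x * fls_shift (int N - 1) (fls_deriv y) + fls_shift (int N - 1) (fls_deriv x) * y"
    by (simp add: fls_shifted_times_simps)
  thus ?thesis unfolding Dxf_def by (simp add: algebra_simps)
qed

lemma Dxf_nth: "Dxf N z $$ k = inverse (of_nat N) * (of_int (k + int N) * z $$ (k + int N))"
  by (simp add: Dxf_def algebra_simps)

lemma vge_Dxf: "vge z A \<Longrightarrow> vge (Dxf N z) (A - int N)"
  unfolding vge_def Dxf_nth by simp

lemma x_Dxf:
  assumes "N > 0"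
  shows "fls_X ^ N * Dxf N z = fls_const (inverse (of_nat N)) * (fls_X * fls_deriv z)"
proof -
  have "fls_X ^ N * Dxf N z = fls_const (inverse (of_nat N)) * (fls_X ^ N * fls_shift (int N - 1) (fls_deriv z))"
    unfolding Dxf_def by (simp add: ac_simps)
  also have "fls_X ^ N * fls_shift (int N - 1) (fls_deriv z) = fls_X * fls_deriv z"
    by (simp add: fls_X_power_times_conv_shift fls_X_times_conv_shift)
  finally show ?thesis .
qed

lemma theta_nth: "(fls_X * fls_deriv z) $$ m = of_int m * z $$ m"
  by (simp add: fls_X_times_conv_shift)

lemma Dxf_compose:
  assumes N: "N > 0"
  shows "Dxf N (fps_to_fls (c oo fps_X ^ N)) = fps_to_fls (fps_deriv c oo fps_X ^ N)"
proof -
  define G where "G = fps_to_fls (fps_deriv c oo fps_X ^ N)"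
  have "fps_deriv (c oo fps_X ^ N) = (fps_deriv c oo fps_X ^ N) * fps_deriv (fps_X ^ N)"
    using N by (intro fps_compose_deriv) simp
  also have "fps_deriv (fps_X ^ N :: complex fps) = fps_const (of_nat N) * fps_X ^ (N - 1)"
    using fps_deriv_power'[of "fps_X::complex fps" N] by (simp add: fps_of_nat)
  finally have "fls_deriv (fps_to_fls (c oo fps_X ^ N)) = G * (fls_const (of_nat N) * fls_X ^ (N - 1))"
    unfolding G_def fls_deriv_fps_to_fls by (simp add: fls_times_fps_to_fls fps_to_fls_power)
  also have "\<dots> = fls_const (of_nat N) * fls_shift (- int (N - 1)) G"
    by (simp only: fls_X_power_times_conv_shift fls_shifted_times_simps mult.commute)
  finally have "Dxf N (fps_to_fls (c oo fps_X ^ N)) =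
      fls_const (inverse (of_nat N)) * (fls_const (of_nat N) * fls_shift (int N - 1) (fls_shift (- int (N - 1)) G))"
    unfolding Dxf_def by (simp add: fls_shifted_times_simps)
  also have "fls_shift (int N - 1) (fls_shift (- int (N - 1)) G) = G" using N by simp
  also have "fls_const (inverse (of_nat N)) * (fls_const (of_nat N) * G) = G"
    using N by (simp add: mult.assoc[symmetric])
  finally show ?thesis unfolding G_def .
qed

lemma rho_lemma:
  fixes d :: "complex fls"
  assumes d0: "d \<noteq> 0"
  shows "vge ((fls_X * fls_deriv d) / d) 0 \<and> ((fls_X * fls_deriv d) / d) $$ 0 = of_int (fls_subdegree d)"
proof -
  define s where "s = fls_subdegree d"
  define th where "th = fls_X * fls_deriv d"
  define rho where "rho = th / d"
  have rd: "rho * d = th" unfolding rho_def using d0 by simp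
  have ths: "th $$ s = of_int s * d $$ s" unfolding th_def by (rule theta_nth)
  have thv: "vge th s" unfolding vge_def th_def theta_nth s_def by simp
  have dv: "vge d s" unfolding vge_def s_def by simp
  have ds: "d $$ s \<noteq> 0" unfolding s_def using d0 by simp
  show ?thesis
  proof (cases "rho = 0")
    case True
    hence "th = 0" using rd by simp
    hence "of_int s * d $$ s = 0" using ths by simp
    hence "s = 0" using ds by simp
    thus ?thesis using True unfolding th_def[symmetric] rho_def[symmetric] s_def[symmetric] by simp
  next
    case False
    have th0: "th \<noteq> 0" using rd False d0 by auto
    have "fls_subdegree (rho*d) = fls_subdegree rho + fls_subdegree d" using False d0 by (rule fls_subdegree_mult)
    hence "fls_subdegree th = fls_subdegree rho + s" unfolding s_def rd .
    moreover have "s \<le> fls_subdegree th" using vge_subdeg[OF th0] thv by simp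
    ultimately have "0 \<le> fls_subdegree rho" by simp
    hence rv: "vge rho 0" using vge_subdeg[OF False] by simp
    have "(rho * d) $$ (0 + s) = rho $$ 0 * d $$ s" using vge_mult[OF rv dv] by blast
    hence e: "th $$ s = rho $$ 0 * d $$ s" using rd by simp
    have "rho $$ 0 * d $$ s = of_int s * d $$ s" using e ths by metis
    hence "rho $$ 0 = of_int s" using ds mult_cancel_right[of "rho $$ 0" "d $$ s" "of_int s"] by blast
    thus ?thesis using rv unfolding rho_def th_def s_def by simp
  qed
qed

lemma root_pos_val:
  fixes P :: "complex fls poly" and z :: "complex fls"
  assumes root: "poly P z = 0" and lead: "lead_coeff P = 1"
    and low: "\<And>k. k < degree P \<Longrightarrow> vge (coeff P k) 1"
  shows "vge z 1"
proof (rule ccontr)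
  assume nv: "\<not> vge z 1"
  have z0: "z \<noteq> 0"
  proof
    assume "z = 0" thus False using nv by simp
  qed
  define s where "s = fls_subdegree z"
  have sle: "s \<le> 0" using nv vge_subdeg[OF z0] unfolding s_def by simp
  have zv: "vge z s" unfolding vge_def s_def by simp
  have zs: "z $$ s \<noteq> 0" unfolding s_def using z0 by simp
  define d where "d = degree P"
  have "poly P z = (\<Sum>k\<le>d. coeff P k * z ^ k)" unfolding d_def by (rule poly_altdef)
  hence "0 = (\<Sum>k\<le>d. coeff P k * z ^ k) $$ (int d * s)" using root by simp
  also have "\<dots> = (\<Sum>k\<le>d. (coeff P k * z ^ k) $$ (int d * s))" by (simp add: fls_nth_sum)
  also have "\<dots> = (\<Sum>k\<in>{d}. (coeff P k * z ^ k) $$ (int d * s))"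
  proof (rule sum.mono_neutral_right)
    show "finite {..d}" by simp
    show "{d} \<subseteq> {..d}" by simp
    show "\<forall>k\<in>{..d} - {d}. (coeff P k * z ^ k) $$ (int d * s) = 0"
    proof
      fix k assume k: "k \<in> {..d} - {d}"
      hence kd: "k < d" by auto
      have lk: "vge (coeff P k) 1" using low kd unfolding d_def by blast
      have "vge (coeff P k * z ^ k) (1 + int k * s)"
        using vge_mult[OF lk vge_power[OF zv, THEN conjunct1], THEN conjunct1] .
      moreover have "int d * s < 1 + int k * s"
      proof -
        have "int d * s \<le> int k * s" by (rule mult_right_mono_neg) (use kd sle in auto)
        thus ?thesis by simp
      qed
      ultimately show "(coeff P k * z ^ k) $$ (int d * s) = 0" unfolding vge_def by blast
    qed
  qed
  also have "\<dots> = (coeff P d * z ^ d) $$ (int d * s)" by simp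
  also have "\<dots> = (z $$ s) ^ d"
  proof -
    have "coeff P d = 1" using lead unfolding d_def .
    thus ?thesis using vge_power[OF zv, of d] by simp
  qed
  finally have "(z $$ s) ^ d = 0" by (rule sym)
  thus False using zs by simp
qed


lemma aux_div: "(x::'a::field) * (y / d * e) = (x * y) / d * e"
  by (simp add: divide_inverse ac_simps)

lemma estimate:
  fixes N n :: nat and a uc :: "nat \<Rightarrow> complex fls" and M :: int
  assumes N: "N > 0" and inj: "inj_on a {..<n}" and apos: "\<And>k. k < n \<Longrightarrow> vge (a k) 1"
    and sum0: "(\<Sum>k<n. uc k) = 0" and vg: "\<And>k. k < n \<Longrightarrow> vge (uc k) M"
    and nz: "\<exists>k<n. uc k $$ M \<noteq> 0"
  shows "\<exists>k<n. (\<Sum>j\<in>{..<n}-{k}. (Dxf N (a k) - Dxf N (a j)) / (a k - a j) * (uc k - uc j)) $$ (M - int N) \<noteq> 0"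
proof -
  define s where "s k j = fls_subdegree (a k - a j)" for k j
  define rho where "rho k j = (fls_X * fls_deriv (a k - a j)) / (a k - a j)" for k j
  define lam where "lam k = uc k $$ M" for k
  define q where "q k j = (if k < n \<and> j < n \<and> k \<noteq> j then real_of_int (s k j) else 1)" for k j
  have dnz: "a k - a j \<noteq> 0" if "k < n" "j < n" "k \<noteq> j" for k j
    using inj that by (auto simp: inj_on_def)
  have rho_prop: "vge (rho k j) 0 \<and> rho k j $$ 0 = of_int (s k j)" if "k < n" "j < n" "k \<noteq> j" for k j
    unfolding rho_def s_def using rho_lemma[OF dnz[OF that]] .
  have spos: "s k j > 0" if "k < n" "j < n" "k \<noteq> j" for k j
  proof -
    have "vge (a k - a j) 1" using apos that by (intro vge_diff) auto
    thus ?thesis unfolding s_def using vge_subdeg[OF dnz[OF that]] by simp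
  qed
  have qpos: "\<And>k j. q k j > 0" unfolding q_def using spos by auto
  have lsum: "(\<Sum>k<n. lam k) = 0"
    unfolding lam_def using sum0 by (simp add: fls_nth_sum[symmetric])
  have lnz: "\<exists>k<n. lam k \<noteq> 0" unfolding lam_def using nz .
  obtain k where k: "k < n" and kk: "(\<Sum>j\<in>{..<n}-{k}. of_real (q k j) * (lam k - lam j)) \<noteq> 0"
    using laplacian_nonzero[where q=q and lam=lam, OF qpos lsum lnz] by blast
  define G where "G = (\<Sum>j\<in>{..<n}-{k}. (Dxf N (a k) - Dxf N (a j)) / (a k - a j) * (uc k - uc j))"
  have trm: "fls_X ^ N * ((Dxf N (a k) - Dxf N (a j)) / (a k - a j) * (uc k - uc j)) =
      fls_const (inverse (of_nat N)) * (rho k j * (uc k - uc j))" for j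
  proof -
    have "fls_X ^ N * ((Dxf N (a k) - Dxf N (a j)) / (a k - a j) * (uc k - uc j)) =
        (fls_X ^ N * Dxf N (a k - a j)) / (a k - a j) * (uc k - uc j)"
      by (simp only: Dxf_diff aux_div)
    also have "\<dots> = (fls_const (inverse (of_nat N)) * (fls_X * fls_deriv (a k - a j))) / (a k - a j) * (uc k - uc j)"
      by (simp only: x_Dxf[OF N])
    also have "\<dots> = fls_const (inverse (of_nat N)) * (rho k j * (uc k - uc j))"
      unfolding rho_def by (simp add: divide_inverse ac_simps)
    finally show ?thesis .
  qed
  have "(fls_X ^ N * G) $$ M = (\<Sum>j\<in>{..<n}-{k}. (fls_const (inverse (of_nat N)) * (rho k j * (uc k - uc j))) $$ M)"
    unfolding G_def sum_distrib_left trm fls_nth_sum ..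
  also have "\<dots> = (\<Sum>j\<in>{..<n}-{k}. inverse (of_nat N) * (of_real (q k j) * (lam k - lam j)))"
  proof (rule sum.cong[OF refl])
    fix j assume j: "j \<in> {..<n}-{k}"
    hence jn: "j < n" "k \<noteq> j" by auto
    have rp: "vge (rho k j) 0" "rho k j $$ 0 = of_int (s k j)" using rho_prop[OF k jn] by auto
    have ev: "vge (uc k - uc j) M" using vg k jn by (intro vge_diff) auto
    have "(rho k j * (uc k - uc j)) $$ (0 + M) = rho k j $$ 0 * (uc k - uc j) $$ M"
      using vge_mult[OF rp(1) ev] by blast
    hence "(rho k j * (uc k - uc j)) $$ M = of_int (s k j) * (lam k - lam j)"
      using rp(2) unfolding lam_def by simp
    moreover have "(of_real (q k j) :: complex) = of_int (s k j)" unfolding q_def using k jn by simp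
    ultimately show "(fls_const (inverse (of_nat N)) * (rho k j * (uc k - uc j))) $$ M =
        inverse (of_nat N) * (of_real (q k j) * (lam k - lam j))" by simp
  qed
  also have "\<dots> = inverse (of_nat N) * (\<Sum>j\<in>{..<n}-{k}. of_real (q k j) * (lam k - lam j))"
    by (simp add: sum_distrib_left)
  finally have "(fls_X ^ N * G) $$ M \<noteq> 0" using kk N by simp
  moreover have "(fls_X ^ N * G) $$ M = G $$ (M - int N)"
    by (simp add: fls_X_power_times_conv_shift)
  ultimately show ?thesis using k unfolding G_def by auto
qed


lemma vs_smult: "vector_space (smult :: 'a::field \<Rightarrow> 'a poly \<Rightarrow> 'a poly)"
  by unfold_locales (simp_all add: smult_add_right smult_add_left)

interpretation pv: vector_space "smult :: 'a::field \<Rightarrow> 'a poly \<Rightarrow> 'a poly"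
  by (rule vs_smult)

lemma span_monoms:
  fixes m :: nat
  assumes m: "m > 0"
  shows "pv.span ((\<lambda>i. monom (1::'a::field) i) ` {..<m}) = {p. degree p < m}"
proof
  let ?B = "(\<lambda>i. monom (1::'a) i) ` {..<m}"
  show "pv.span ?B \<subseteq> {p. degree p < m}"
  proof
    fix p assume "p \<in> pv.span ?B"
    then obtain u where p: "p = (\<Sum>v\<in>?B. smult (u v) v)"
      using pv.span_finite[of ?B] by auto
    have "degree (\<Sum>v\<in>?B. smult (u v) v) < m"
    proof (rule degree_sum_less)
      fix v assume "v \<in> ?B"
      then obtain i where i: "i < m" "v = monom 1 i" by auto
      have "degree (smult (u v) v) \<le> i"
        using i degree_smult_le[of "u v" v] degree_monom_le[of "1::'a" i] by simp
      thus "degree (smult (u v) v) < m" using i by simp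
    qed (rule m)
    thus "p \<in> {p. degree p < m}" using p by simp
  qed
  show "{p. degree p < m} \<subseteq> pv.span ?B"
  proof
    fix p :: "'a poly" assume "p \<in> {p. degree p < m}"
    hence dp: "degree p \<le> m - 1" by simp
    have "p = (\<Sum>i\<le>m - 1. monom (coeff p i) i)" using poly_as_sum_of_monoms'[OF dp] by simp
    also have "\<dots> = (\<Sum>i\<le>m - 1. smult (coeff p i) (monom 1 i))" by (simp add: smult_monom)
    finally have pe: "p = (\<Sum>i\<le>m - 1. smult (coeff p i) (monom 1 i))" .
    have "(\<Sum>i\<le>m - 1. smult (coeff p i) (monom 1 i)) \<in> pv.span ?B"
    proof (rule pv.span_sum)
      fix i assume "i \<in> {..m - 1}"
      hence "monom 1 i \<in> ?B" using m by auto
      thus "smult (coeff p i) (monom 1 i) \<in> pv.span ?B"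
        by (intro pv.span_scale pv.span_base)
    qed
    thus "p \<in> pv.span ?B" using pe by simp
  qed
qed

lemma indep_monoms: "pv.independent ((\<lambda>i. monom (1::'a::field) i) ` {..<m})"
  unfolding pv.independent_explicit_module
proof (intro allI impI)
  let ?B = "(\<lambda>i. monom (1::'a) i) ` {..<m}"
  fix t u v assume t: "finite t" "t \<subseteq> ?B" and s: "(\<Sum>v\<in>t. smult (u v) v) = 0" and v: "v \<in> t"
  obtain i where i: "v = monom 1 i" using v t by auto
  have "0 = coeff (\<Sum>v\<in>t. smult (u v) v) i" using s by simp
  also have "\<dots> = (\<Sum>w\<in>t. u w * coeff w i)" by (simp add: coeff_sum)
  also have "\<dots> = u v * coeff v i + (\<Sum>w\<in>t - {v}. u w * coeff w i)"
    using t v by (simp add: sum.remove)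
  also have "(\<Sum>w\<in>t - {v}. u w * coeff w i) = 0"
  proof (rule sum.neutral, rule ballI)
    fix w assume w: "w \<in> t - {v}"
    then obtain j where j: "w = monom 1 j" using t by auto
    have "j \<noteq> i"
    proof
      assume "j = i" hence "w = v" using i j by simp
      thus False using w by simp
    qed
    thus "u w * coeff w i = 0" using j by simp
  qed
  finally show "u v = 0" using i by simp
qed

lemma inj_imp_surj_poly:
  fixes T :: "'a::field poly \<Rightarrow> 'a poly" and m :: nat
  assumes add: "\<And>p q. T (p + q) = T p + T q" and sm: "\<And>c p. T (smult c p) = smult c (T p)"
    and into: "\<And>p. degree p < m \<Longrightarrow> degree (T p) < m"
    and inj: "\<And>p. degree p < m \<Longrightarrow> T p = 0 \<Longrightarrow> p = 0"
    and m: "m > 0"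
    and q: "degree q < m"
  shows "\<exists>p. degree p < m \<and> T p = q"
proof -
  let ?B = "(\<lambda>i. monom (1::'a) i) ` {..<m}"
  have mh: "module_hom smult smult T"
    unfolding module_hom_iff using vs_smult add sm by (simp add: module_iff_vector_space)
  have spB: "pv.span ?B = {p. degree p < m}" by (rule span_monoms[OF m])
  have injV: "inj_on T (pv.span ?B)"
  proof (rule inj_onI)
    fix x y assume x: "x \<in> pv.span ?B" and y: "y \<in> pv.span ?B" and e: "T x = T y"
    have "T (x - y) = T x - T y" using add[of "x - y" y] by simp
    hence "T (x - y) = 0" using e by simp
    moreover have "degree (x - y) < m"
    proof -
      have "degree x < m" "degree y < m" using x y spB by simp_all
      thus ?thesis using degree_diff_le_max[of x y] by simp
    qed
    ultimately have "x - y = 0" using inj[of "x - y"] by simp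
    thus "x = y" by simp
  qed
  have indS: "pv.independent (T ` ?B)"
    using module_hom.independent_injective_image[OF mh indep_monoms injV] .
  have finB: "finite ?B" by simp
  have "inj_on (\<lambda>i. monom (1::'a) i) {..<m}" by (rule inj_onI) (simp add: monom_eq_iff')
  hence cB: "card ?B = m" by (simp add: card_image)
  have injB: "inj_on T ?B" by (rule inj_on_subset[OF injV pv.span_superset])
  have cS: "card (T ` ?B) = m" using card_image[OF injB] cB by simp
  have "q \<in> pv.span (T ` ?B)"
  proof (rule ccontr)
    assume nq: "q \<notin> pv.span (T ` ?B)"
    have qn: "q \<notin> T ` ?B"
    proof
      assume "q \<in> T ` ?B" hence "q \<in> pv.span (T ` ?B)" by (rule pv.span_base)
      thus False using nq by simp
    qed
    have ind2: "pv.independent (insert q (T ` ?B))"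
      using indS nq qn by (simp add: pv.independent_insert)
    have fS: "finite (T ` ?B)" by simp
    have "pv.dim (insert q (T ` ?B)) = card (insert q (T ` ?B))"
      by (rule pv.dim_eq_card_independent[OF ind2])
    also have "\<dots> = m + 1" using cS fS qn by simp
    finally have d1: "pv.dim (insert q (T ` ?B)) = m + 1" .
    have sub: "insert q (T ` ?B) \<subseteq> pv.span ?B"
    proof
      fix x assume "x \<in> insert q (T ` ?B)"
      then consider "x = q" | "x \<in> T ` ?B" by blast
      thus "x \<in> pv.span ?B"
      proof cases
        case 1 thus ?thesis using q spB by simp
      next
        case 2
        then obtain b where b: "b \<in> ?B" "x = T b" by blast
        have "b \<in> pv.span ?B" using b(1) by (rule pv.span_base)
        hence "degree b < m" using spB by simp
        hence "degree (T b) < m" by (rule into)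
        thus ?thesis using b(2) spB by simp
      qed
    qed
    have "pv.dim (insert q (T ` ?B)) \<le> card ?B" by (rule pv.dim_le_card[OF sub finB])
    thus False using d1 cB by simp
  qed
  moreover have "pv.span (T ` ?B) = T ` pv.span ?B"
    by (rule module_hom.span_image[OF mh])
  ultimately have "q \<in> T ` pv.span ?B" by simp
  then obtain p where p: "p \<in> pv.span ?B" "q = T p" by (rule imageE)
  have "degree p < m" using p(1) spB by simp
  thus ?thesis using p(2) by blast
qed


lemma cutoff_add: "poly_cutoff k (p+q) = poly_cutoff k p + poly_cutoff k q"
  by (intro poly_eqI) (simp add: coeff_poly_cutoff)
lemma cutoff_smult: "poly_cutoff k (smult c p) = smult c (poly_cutoff k p)"
  by (intro poly_eqI) (simp add: coeff_poly_cutoff)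
lemma shift_add: "poly_shift k (p+q) = poly_shift k p + poly_shift k q"
  by (intro poly_eqI) (simp add: coeff_poly_shift)
lemma shift_smult: "poly_shift k (smult c p) = smult c (poly_shift k p)"
  by (intro poly_eqI) (simp add: coeff_poly_shift)
lemma degree_cutoff: "k > 0 \<Longrightarrow> degree (poly_cutoff k p) < k"
proof -
  assume k: "k > 0"
  have "degree (poly_cutoff k p) \<le> k - 1"
  proof (rule degree_le, intro allI impI)
    fix i assume "k - 1 < i"
    hence "\<not> i < k" using k by simp
    thus "coeff (poly_cutoff k p) i = 0" by (simp add: coeff_poly_cutoff)
  qed
  thus ?thesis using k by simp
qed
lemma degree_shift: "degree (poly_shift k p) \<le> degree p - k"
  by (rule degree_le) (simp add: coeff_poly_shift coeff_eq_0)
lemma cutoff_shift_zero: "poly_cutoff k p = 0 \<Longrightarrow> poly_shift k p = 0 \<Longrightarrow> p = 0"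
proof (intro poly_eqI)
  fix j assume c: "poly_cutoff k p = 0" and s: "poly_shift k p = 0"
  show "coeff p j = coeff 0 j"
  proof (cases "j < k")
    case True
    have "coeff (poly_cutoff k p) j = coeff p j" using True by (simp add: coeff_poly_cutoff)
    thus ?thesis using c by simp
  next
    case False
    have "coeff (poly_shift k p) (j - k) = coeff p j" using False by (simp add: coeff_poly_shift)
    thus ?thesis using s by simp
  qed
qed

lemma degree_map_poly_le': "h 0 = 0 \<Longrightarrow> degree (map_poly h p) \<le> degree p"
  by (rule degree_le) (simp add: coeff_map_poly coeff_eq_0)

lemma ramify_props:
  assumes N: "N > 0"
  shows "ramify N 0 = 0" "ramify N 1 = 1" "\<And>x y. ramify N (x+y) = ramify N x + ramify N y"
    "\<And>x y. ramify N (x*y) = ramify N x * ramify N y"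
    "\<And>c. ramify N (fps_to_fls c) = fps_to_fls (c oo fps_X ^ N)"
    "\<And>m x. ramify N (of_nat m * x) = of_nat m * ramify N x"
proof -
  have H: "(fps_X ^ N :: complex fps) \<noteq> 0" "(fps_X ^ N :: complex fps) $ 0 = 0" using N by simp_all
  show "ramify N 0 = 0" "ramify N 1 = 1" unfolding ramify_def by simp_all
  show "\<And>x y. ramify N (x+y) = ramify N x + ramify N y" unfolding ramify_def
    using fls_compose_fps_add[OF H] .
  show m: "\<And>x y. ramify N (x*y) = ramify N x * ramify N y" unfolding ramify_def
    using fls_compose_fps_mult[OF H] .
  show "\<And>c. ramify N (fps_to_fls c) = fps_to_fls (c oo fps_X ^ N)" unfolding ramify_def
    using fls_compose_fps_to_fls[OF H] .
  show "\<And>m x. ramify N (of_nat m * x) = of_nat m * ramify N x"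
    using m unfolding ramify_def by simp
qed

lemma ramify_nz:
  assumes N: "N > 0" and x: "x \<noteq> 0"
  shows "ramify N x \<noteq> 0"
proof
  assume "ramify N x = 0"
  hence "ramify N x * ramify N (inverse x) = 0" by simp
  also have "ramify N x * ramify N (inverse x) = ramify N (x * inverse x)"
    using ramify_props(4)[OF N] by simp
  also have "\<dots> = 1" using x ramify_props(2)[OF N] by simp
  finally show False by simp
qed


lemma rat_le_div: "(N::nat) > 0 \<Longrightarrow> (r::rat) \<le> of_int s / of_nat N \<longleftrightarrow> r * of_nat N \<le> of_int s"
  by (simp add: pos_le_divide_eq)
lemma rat_less_div: "(N::nat) > 0 \<Longrightarrow> (r::rat) < of_int s / of_nat N \<longleftrightarrow> r * of_nat N < of_int s"
  by (simp add: pos_less_divide_eq)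

theorem mainTheorem4:
  fixes f :: "complex fps poly" and n :: nat and r :: rat
    and N :: nat and a :: "nat \<Rightarrow> complex fls"
  assumes dist: "distinguished f" and red: "reduced f"
    and deg: "degree f = n" and n2: "n \<ge> 2"
    and N: "N > 0"
    and a_dist: "inj_on a {..<n}"
    and split: "map_poly (ramify N) (fps_poly_to_fls f) = (\<Prod>i<n. [:- a i, 1:])"
    and r: "r * of_nat (lcm_irr_degrees f) \<in> \<int>"
  shows "\<forall>w :: complex fls poly. degree w < n - 1 \<and> val_ge N n a w r \<longrightarrow>
           (\<exists>u v :: complex fls poly.
              degree u < n - 1 \<and> val_ge N n a u (r + 1) \<and>
              degree v < n \<and> val_gt N n a v r \<and>
              w * fps_poly_to_fls f = u * fps_poly_to_fls (dx f) + v * fps_poly_to_fls (dy f))"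
proof (intro allI impI)
  fix w :: "complex fls poly"
  assume wass: "degree w < n - 1 \<and> val_ge N n a w r"
  define R where "R = ramify N"
  have R0: "R 0 = 0" unfolding R_def using ramify_props(1)[OF N] .
  have Radd: "\<And>x y. R (x+y) = R x + R y" unfolding R_def using ramify_props(3)[OF N] .
  have Rmul: "\<And>x y. R (x*y) = R x * R y" unfolding R_def using ramify_props(4)[OF N] .
  have Rfps: "\<And>c. R (fps_to_fls c) = fps_to_fls (c oo fps_X ^ N)" unfolding R_def using ramify_props(5)[OF N] .
  have Rnat: "\<And>m x. R (of_nat m * x) = of_nat m * R x" unfolding R_def using ramify_props(6)[OF N] .
  have Rnz: "\<And>x. x \<noteq> 0 \<Longrightarrow> R x \<noteq> 0" unfolding R_def using ramify_nz[OF N] by blast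
  define F0 where "F0 = fps_poly_to_fls f"
  define Fx where "Fx = fps_poly_to_fls (dx f)"
  define Fy where "Fy = fps_poly_to_fls (dy f)"
  define P where "P = (\<Prod>k<n. [:- a k, 1:])"
  define mR where "mR p = map_poly R p" for p
  have mRmul: "\<And>p q. mR (p*q) = mR p * mR q" unfolding mR_def by (rule map_poly_mult'[OF R0 Radd Rmul])
  have mRadd: "\<And>p q. mR (p+q) = mR p + mR q" unfolding mR_def by (rule map_poly_add'[OF R0 Radd])
  have mRdeg: "\<And>p. degree (mR p) = degree p" unfolding mR_def by (rule degree_map_poly) (rule Rnz)
  have mR0: "\<And>p. mR p = 0 \<Longrightarrow> p = 0"
  proof -
    fix p assume "mR p = 0"
    thus "p = 0" unfolding mR_def using map_poly_eq_0_iff[of R p] R0 Rnz by blast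
  qed
  have mRz: "mR 0 = 0" unfolding mR_def by simp
  have RF0: "mR F0 = P" unfolding mR_def R_def F0_def P_def by (rule split)
  have F0d: "Fy = pderiv F0" unfolding Fy_def F0_def fps_poly_to_fls_def dy_def
    by (rule map_poly_pderiv') (simp_all add: fls_times_fps_to_fls)
  have RFy: "mR Fy = pderiv P"
  proof -
    have "mR Fy = pderiv (mR F0)" unfolding mR_def F0d by (rule map_poly_pderiv'[OF R0 Rnat])
    thus ?thesis using RF0 by simp
  qed
  have RFx: "mR Fx = map_poly (Dxf N) P"
  proof -
    have e: "\<And>c. R (fps_to_fls (fps_deriv c)) = Dxf N (R (fps_to_fls c))"
      using Rfps Dxf_compose[OF N] by simp
    have A1: "map_poly fps_to_fls (map_poly fps_deriv f) = map_poly (fps_to_fls \<circ> fps_deriv) f"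
      by (rule map_poly_map_poly) simp_all
    have A2: "map_poly R (map_poly (fps_to_fls \<circ> fps_deriv) f) = map_poly (R \<circ> (fps_to_fls \<circ> fps_deriv)) f"
      by (rule map_poly_map_poly) (simp_all add: R0)
    have B1: "map_poly R (map_poly fps_to_fls f) = map_poly (R \<circ> fps_to_fls) f"
      by (rule map_poly_map_poly) (simp_all add: R0)
    have B2: "map_poly (Dxf N) (map_poly (R \<circ> fps_to_fls) f) = map_poly (Dxf N \<circ> (R \<circ> fps_to_fls)) f"
      by (rule map_poly_map_poly) (simp_all add: R0 Dxf_0)
    have fe: "R \<circ> (fps_to_fls \<circ> fps_deriv) = Dxf N \<circ> (R \<circ> fps_to_fls)"
      by (rule ext) (simp only: o_apply e)
    have "mR Fx = map_poly (R \<circ> (fps_to_fls \<circ> fps_deriv)) f"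
      unfolding mR_def Fx_def fps_poly_to_fls_def dx_def A1 A2 ..
    also have "\<dots> = map_poly (Dxf N) (mR F0)"
      unfolding fe mR_def F0_def fps_poly_to_fls_def B1 B2 ..
    finally show ?thesis using RF0 by simp
  qed
  have degP: "degree P = n" unfolding P_def by (subst degree_prod_sum_eq) auto
  have leadP: "lead_coeff P = 1" unfolding P_def lead_coeff_prod by simp
  have coeffP: "\<And>k. coeff P k = R (fps_to_fls (coeff f k))"
    unfolding RF0[symmetric] mR_def F0_def fps_poly_to_fls_def by (simp add: coeff_map_poly R0)
  have apos: "\<And>k. k < n \<Longrightarrow> vge (a k) 1"
  proof -
    fix k assume k: "k < n"
    show "vge (a k) 1"
    proof (rule root_pos_val)
      show "poly P (a k) = 0" unfolding P_def using P_split[OF a_dist k] by simp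
      show "lead_coeff P = 1" by (rule leadP)
      fix j assume j: "j < degree P"
      have c0: "coeff f j $ 0 = 0" using dist j degP deg unfolding distinguished_def by simp
      show "vge (coeff P j) 1"
        unfolding coeffP Rfps vge_def
      proof (intro allI impI)
        fix i :: int assume i: "i < 1"
        show "fps_to_fls (coeff f j oo fps_X ^ N) $$ i = 0"
        proof (cases "i < 0")
          case True thus ?thesis by simp
        next
          case False
          hence "i = 0" using i by simp
          thus ?thesis using c0 by simp
        qed
      qed
    qed
  qed
  define cf where "cf p k = poly (mR p) (a k) / Dd n a k" for p k
  have rep: "\<And>p. degree p < n \<Longrightarrow> mR p = (\<Sum>i<n. smult (cf p i) (eps n a i))"
    unfolding cf_def using interpolation[OF a_dist] mRdeg by simp
  define G where "G c k = (\<Sum>j\<in>{..<n}-{k}. (Dxf N (a k) - Dxf N (a j)) / (a k - a j) * (c k - c j))" for c k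
  have key: "(\<forall>k<n. cf v k = Dxf N (a k) * cf u k) \<and> (\<forall>k<n. cf w' k = G (cf u) k)"
    if du: "degree u < n - 1" and dv: "degree v < n" and dw: "degree w' < n - 1"
      and eq: "w' * F0 = u * Fx + v * Fy" for u v w'
  proof -
    have du': "degree u < n" and dw': "degree w' < n" using du dw by simp_all
    have eqL: "mR w' * P = mR u * map_poly (Dxf N) P + mR v * pderiv P"
    proof -
      have "mR (w' * F0) = mR (u * Fx + v * Fy)" using eq by simp
      thus ?thesis unfolding mRmul mRadd RF0 RFx RFy .
    qed
    note LI = laplace_identity[OF a_dist Dxf_0 Dxf_add Dxf_mult rep[OF du'] rep[OF dv] rep[OF dw'] eqL[unfolded P_def]]
    show ?thesis using LI unfolding G_def by blast
  qed
  have bound: "(\<forall>k<n. cf u k = 0) \<or> (\<exists>M. (\<forall>k<n. vge (cf u k) M) \<and> (\<exists>k<n. cf w' k $$ (M - int N) \<noteq> 0))"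
    if du: "degree u < n - 1" and dv: "degree v < n" and dw: "degree w' < n - 1"
      and eq: "w' * F0 = u * Fx + v * Fy" for u v w'
  proof (cases "\<forall>k<n. cf u k = 0")
    case True thus ?thesis by blast
  next
    case False
    define K where "K = {k. k < n \<and> cf u k \<noteq> 0}"
    define S where "S = (\<lambda>k. fls_subdegree (cf u k)) ` K"
    have finS: "finite S" unfolding S_def K_def by simp
    have neS: "S \<noteq> {}" unfolding S_def K_def using False by auto
    define M where "M = Min S"
    have "M \<in> S" unfolding M_def by (rule Min_in[OF finS neS])
    then obtain k0 where k0e: "M = fls_subdegree (cf u k0)" and k0K: "k0 \<in> K"
      unfolding S_def by (rule imageE)
    have k0: "k0 \<in> K" "fls_subdegree (cf u k0) = M" using k0e k0K by simp_all
    have vgM: "\<forall>k<n. vge (cf u k) M"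
    proof (intro allI impI)
      fix k assume k: "k < n"
      show "vge (cf u k) M"
      proof (cases "cf u k = 0")
        case True thus ?thesis by simp
      next
        case False
        hence "fls_subdegree (cf u k) \<in> S" unfolding S_def K_def using k by blast
        hence "M \<le> fls_subdegree (cf u k)" unfolding M_def using finS by simp
        thus ?thesis using vge_subdeg[OF False] by simp
      qed
    qed
    have nzM: "\<exists>k<n. cf u k $$ M \<noteq> 0"
    proof -
      have "k0 < n" "cf u k0 \<noteq> 0" using k0(1) unfolding K_def by auto
      thus ?thesis using k0(2) by (intro exI[of _ k0]) auto
    qed
    have sum0: "(\<Sum>k<n. cf u k) = 0"
    proof -
      have "(\<Sum>k<n. cf u k) = coeff (mR u) (n - 1)"
        using rep[of u] du combo_top_coeff[OF a_dist] by simp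
      also have "\<dots> = 0" using du mRdeg by (simp add: coeff_eq_0)
      finally show ?thesis .
    qed
    obtain k where k: "k < n" "G (cf u) k $$ (M - int N) \<noteq> 0"
      using estimate[OF N a_dist apos sum0 _ nzM] vgM unfolding G_def by blast
    have "cf w' k = G (cf u) k" using key[OF du dv dw eq] k(1) by blast
    hence wk: "cf w' k $$ (M - int N) \<noteq> 0" using k(2) by simp
    have "\<exists>M. (\<forall>k<n. vge (cf u k) M) \<and> (\<exists>k<n. cf w' k $$ (M - int N) \<noteq> 0)"
      using vgM k(1) wk by blast
    thus ?thesis by (rule disjI2)
  qed
  define T where "T z = poly_cutoff (n - 1) z * Fx + poly_shift (n - 1) z * Fy" for z
  have degF0: "degree F0 \<le> n" unfolding F0_def fps_poly_to_fls_def using degree_map_poly_le'[of fps_to_fls f] deg by simp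
  have degFx: "degree Fx \<le> n" unfolding Fx_def fps_poly_to_fls_def dx_def
    using degree_map_poly_le'[of fps_to_fls "map_poly fps_deriv f"] degree_map_poly_le'[of fps_deriv f] deg by simp
  have degFy: "degree Fy \<le> n - 1" using degF0 unfolding F0d degree_pderiv by simp
  have Tadd: "\<And>p q. T (p + q) = T p + T q" unfolding T_def by (simp add: cutoff_add shift_add algebra_simps)
  have Tsm: "\<And>c p. T (smult c p) = smult c (T p)" unfolding T_def by (simp add: cutoff_smult shift_smult smult_add_right)
  have Tinto: "degree (T z) < 2 * n - 1" if dz: "degree z < 2 * n - 1" for z
  proof -
    have d1: "degree (poly_cutoff (n - 1) z) < n - 1" using n2 by (intro degree_cutoff) simp
    have d2: "degree (poly_shift (n - 1) z) \<le> n - 1" using degree_shift[of "n-1" z] dz by simp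
    have "degree (poly_cutoff (n - 1) z * Fx) \<le> 2 * n - 2"
      using degree_mult_le[of "poly_cutoff (n - 1) z" Fx] d1 degFx by simp
    moreover have "degree (poly_shift (n - 1) z * Fy) \<le> 2 * n - 2"
      using degree_mult_le[of "poly_shift (n - 1) z" Fy] d2 degFy by simp
    ultimately have "degree (T z) \<le> 2 * n - 2" unfolding T_def by (intro degree_add_le)
    thus ?thesis using n2 by simp
  qed
  have Tinj: "z = 0" if dz: "degree z < 2 * n - 1" and Tz: "T z = 0" for z
  proof -
    define u where "u = poly_cutoff (n - 1) z"
    define v where "v = poly_shift (n - 1) z"
    have du: "degree u < n - 1" unfolding u_def using n2 by (intro degree_cutoff) simp
    have dv: "degree v < n" unfolding v_def using degree_shift[of "n-1" z] dz n2 by simp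
    have d0: "degree (0::complex fls poly) < n - 1" using n2 by simp
    have eq: "0 * F0 = u * Fx + v * Fy" using Tz unfolding T_def u_def v_def by simp
    have cf0: "cf 0 k = 0" for k unfolding cf_def mRz by simp
    from bound[OF du dv d0 eq] have allz: "\<forall>k<n. cf u k = 0" unfolding cf0 by simp
    have "mR u = (\<Sum>i<n. smult (cf u i) (eps n a i))" using rep[of u] du by simp
    also have "\<dots> = 0" using allz by simp
    finally have u0: "u = 0" by (rule mR0)
    have "\<forall>k<n. cf v k = 0" using key[OF du dv d0 eq] allz by simp
    hence "mR v = 0" using rep[OF dv] by simp
    hence v0: "v = 0" by (rule mR0)
    show "z = 0" using u0 v0 unfolding u_def v_def by (rule cutoff_shift_zero)
  qed
  have dwF: "degree (w * F0) < 2 * n - 1"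
  proof -
    have "degree (w * F0) \<le> degree w + degree F0" by (rule degree_mult_le)
    moreover have "degree w < n - 1" using wass by blast
    ultimately show ?thesis using degF0 n2 by linarith
  qed
  have m0: "0 < 2 * n - 1" using n2 by simp
  obtain z where zz: "degree z < 2 * n - 1 \<and> T z = w * F0"
    using inj_imp_surj_poly[OF Tadd Tsm Tinto Tinj m0 dwF] by blast
  have dz: "degree z < 2 * n - 1" and Tz: "T z = w * F0" using zz by simp_all
  define u where "u = poly_cutoff (n - 1) z"
  define v where "v = poly_shift (n - 1) z"
  have du: "degree u < n - 1" unfolding u_def using n2 by (intro degree_cutoff) simp
  have dv: "degree v < n" unfolding v_def using degree_shift[of "n-1" z] dz n2 by simp
  have eq: "w * F0 = u * Fx + v * Fy" using Tz unfolding T_def u_def v_def by simp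
  have dw: "degree w < n - 1" using wass by simp
  obtain c0 where c0: "map_poly (ramify N) w = (\<Sum>i<n. smult (c0 i) (eps n a i))"
    and c0v: "\<forall>i<n. nu_ge N (c0 i) r" using wass unfolding val_ge_def by blast
  have cfw: "cf w k = c0 k" if "k < n" for k
    unfolding cf_def using combo_coeff_uniq[OF a_dist _ that, of "mR w" c0] c0 unfolding mR_def R_def by simp
  have K1: "\<forall>k<n. cf v k = Dxf N (a k) * cf u k" using key[OF du dv dw eq] by blast
  have repu: "map_poly (ramify N) u = (\<Sum>i<n. smult (cf u i) (eps n a i))"
    using rep[of u] du unfolding mR_def R_def by simp
  have repv: "map_poly (ramify N) v = (\<Sum>i<n. smult (cf v i) (eps n a i))"
    using rep[OF dv] unfolding mR_def R_def by simp
  have vals: "(\<forall>k<n. nu_ge N (cf u k) (r + 1)) \<and> (\<forall>k<n. nu_gt N (cf v k) r)"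
  proof (cases "\<forall>k<n. cf u k = 0")
    case True
    hence "\<forall>k<n. cf v k = 0" using K1 by simp
    thus ?thesis using True unfolding nu_ge_def nu_gt_def by simp
  next
    case False
    then obtain M where vgM: "\<forall>k<n. vge (cf u k) M" and kk: "\<exists>k<n. cf w k $$ (M - int N) \<noteq> 0"
      using bound[OF du dv dw eq] by blast
    from kk obtain k where k: "k < n" "c0 k $$ (M - int N) \<noteq> 0" using cfw by auto
    have ck0: "c0 k \<noteq> 0" using k(2) by auto
    have sd: "fls_subdegree (c0 k) \<le> M - int N" using k(2) by (rule fls_subdegree_leI)
    have "r \<le> of_int (fls_subdegree (c0 k)) / of_nat N" using c0v k(1) ck0 unfolding nu_ge_def by blast
    hence "r * of_nat N \<le> of_int (fls_subdegree (c0 k))" using rat_le_div[OF N] by simp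
    also have "\<dots> \<le> of_int (M - int N)" using sd by simp
    finally have rM: "r * of_nat N \<le> of_int M - of_nat N" by simp
    have A: "\<forall>k<n. nu_ge N (cf u k) (r + 1)"
    proof (intro allI impI)
      fix k assume k: "k < n"
      show "nu_ge N (cf u k) (r + 1)"
      proof (cases "cf u k = 0")
        case True thus ?thesis unfolding nu_ge_def by simp
      next
        case False
        have "M \<le> fls_subdegree (cf u k)" using vgM k vge_subdeg[OF False] by blast
        hence "(r + 1) * of_nat N \<le> of_int (fls_subdegree (cf u k))" using rM
          by (simp add: algebra_simps)
        thus ?thesis unfolding nu_ge_def using rat_le_div[OF N] by simp
      qed
    qed
    have B: "\<forall>k<n. nu_gt N (cf v k) r"
    proof (intro allI impI)
      fix k assume k: "k < n"
      show "nu_gt N (cf v k) r"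
      proof (cases "cf v k = 0")
        case True thus ?thesis unfolding nu_gt_def by simp
      next
        case False
        have "vge (Dxf N (a k)) (1 - int N)" using vge_Dxf[OF apos[OF k]] .
        hence "vge (Dxf N (a k) * cf u k) (1 - int N + M)"
          using vge_mult[of "Dxf N (a k)" "1 - int N" "cf u k" M] vgM k by blast
        hence "vge (cf v k) (1 - int N + M)" using K1 k by simp
        hence "1 - int N + M \<le> fls_subdegree (cf v k)" using vge_subdeg[OF False] by blast
        hence "r * of_nat N < of_int (fls_subdegree (cf v k))" using rM
          by linarith
        thus ?thesis unfolding nu_gt_def using rat_less_div[OF N] by simp
      qed
    qed
    show ?thesis using A B by blast
  qed
  show "\<exists>u v :: complex fls poly.
              degree u < n - 1 \<and> val_ge N n a u (r + 1) \<and>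
              degree v < n \<and> val_gt N n a v r \<and>
              w * fps_poly_to_fls f = u * fps_poly_to_fls (dx f) + v * fps_poly_to_fls (dy f)"
  proof (intro exI conjI)
    show "degree u < n - 1" by (rule du)
    show "degree v < n" by (rule dv)
    show "val_ge N n a u (r + 1)" unfolding val_ge_def using repu vals by blast
    show "val_gt N n a v r" unfolding val_gt_def using repv vals by blast
    show "w * fps_poly_to_fls f = u * fps_poly_to_fls (dx f) + v * fps_poly_to_fls (dy f)"
      using eq unfolding F0_def Fx_def Fy_def .
  qed
qed


end
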